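(* Let $G$ be a finite simple $3$-connected edge-pancyclic graph of order $n$. Then $e(G)\ge 2n-2$, and equality holds if and only if $G$ is isomorphic to the wheel $W_n=K_1\vee C_{n-1}$.
   Context: A $k$-cycle is a cycle of length $k$. A graph $G$ of order $n$ is edge-pancyclic if for every integer $k$ with $3\le k\le n$, every edge of $G$ lies in a $k$-cycle. $e(G)$ is the number of edges. $W_n$ is the graph obtained from a cycle on $n-1$ vertices by adding a new vertex adjacent to all of them. *)

theory Defs
  imports Main
begin

definition simple_graph :: "'a set \<Rightarrow> 'a set set \<Rightarrow> bool" where
  "simple_graph V E \<longleftrightarrow> finite V \<and>
     (\<forall>e\<in>E. \<exists>u v. u \<noteq> v \<and> u \<in> V \<and> v \<in> V \<and> e = {u, v})"

definition connected_on :: "'a set set \<Rightarrow> 'a set \<Rightarrow> bool" where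
  "connected_on E W \<longleftrightarrow>
     (\<forall>u\<in>W. \<forall>v\<in>W. (\<lambda>x y. x \<in> W \<and> y \<in> W \<and> {x, y} \<in> E)\<^sup>*\<^sup>* u v)"

definition k_connected :: "nat \<Rightarrow> 'a set \<Rightarrow> 'a set set \<Rightarrow> bool" where
  "k_connected k V E \<longleftrightarrow> card V > k \<and>
     (\<forall>S. S \<subseteq> V \<and> card S < k \<longrightarrow> connected_on E (V - S))"

definition is_cycle :: "'a set set \<Rightarrow> 'a list \<Rightarrow> bool" where
  "is_cycle E cs \<longleftrightarrow> length cs \<ge> 3 \<and> distinct cs \<and>
     (\<forall>i < length cs. {cs ! i, cs ! ((i + 1) mod length cs)} \<in> E)"

definition cycle_edges :: "'a list \<Rightarrow> 'a set set" where
  "cycle_edges cs = {{cs ! i, cs ! ((i + 1) mod length cs)} | i. i < length cs}"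

definition edge_pancyclic :: "'a set \<Rightarrow> 'a set set \<Rightarrow> bool" where
  "edge_pancyclic V E \<longleftrightarrow>
     (\<forall>k. 3 \<le> k \<and> k \<le> card V \<longrightarrow>
        (\<forall>e\<in>E. \<exists>cs. is_cycle E cs \<and> length cs = k \<and> e \<in> cycle_edges cs))"

text \<open>The wheel W_n on vertex set {0..<n}: hub 0, rim cycle 1,2,...,n-1,1.\<close>
definition wheel_edges :: "nat \<Rightarrow> nat set set" where
  "wheel_edges n = {{0, i} | i. 1 \<le> i \<and> i < n}
                 \<union> {{i, i + 1} | i. 1 \<le> i \<and> i + 1 < n}
                 \<union> {{n - 1, 1}}"

definition graph_iso :: "'a set \<Rightarrow> 'a set set \<Rightarrow> 'b set \<Rightarrow> 'b set set \<Rightarrow> bool" where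
  "graph_iso V E V' E' \<longleftrightarrow> (\<exists>f. bij_betw f V V' \<and>
     (\<forall>u\<in>V. \<forall>v\<in>V. {u, v} \<in> E \<longleftrightarrow> {f u, f v} \<in> E'))"

end

theory Submission
  imports Defs
begin


lemma W_mem: "{i,j} \<in> wheel_edges m \<longleftrightarrow>
  (i = 0 \<and> 1 \<le> j \<and> j < m) \<or> (j = 0 \<and> 1 \<le> i \<and> i < m) \<or>
  (1 \<le> i \<and> j = i+1 \<and> j < m) \<or> (1 \<le> j \<and> i = j+1 \<and> i < m) \<or>
  (i = m - 1 \<and> j = 1) \<or> (i = 1 \<and> j = m - 1)"
  unfolding wheel_edges_def by (auto simp: doubleton_eq_iff)

lemma b11:
  assumes "m \<ge> 4" "1 \<le> p" "p+1 < m" "i \<le> p" "j \<le> p"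
  shows "{i,j} \<in> wheel_edges (m+1) \<longleftrightarrow> {i,j} \<in> wheel_edges m \<and> \<not> (i = p \<and> j = p+1 \<or> i = p+1 \<and> j = p)"
  using assms unfolding W_mem by auto

lemma b12:
  assumes "m \<ge> 4" "1 \<le> p" "p+1 < m" "i \<le> p" "p+2 \<le> j" "j < m+1"
  shows "{i,j} \<in> wheel_edges (m+1) \<longleftrightarrow> {i,j-1} \<in> wheel_edges m \<and> \<not> (i = p \<and> j-1 = p+1 \<or> i = p+1 \<and> j-1 = p)"
  using assms unfolding W_mem by auto

lemma b22:
  assumes "m \<ge> 4" "1 \<le> p" "p+1 < m" "p+2 \<le> i" "i < m+1" "p+2 \<le> j" "j < m+1"
  shows "{i,j} \<in> wheel_edges (m+1) \<longleftrightarrow> {i-1,j-1} \<in> wheel_edges m \<and> \<not> (i-1 = p \<and> j-1 = p+1 \<or> i-1 = p+1 \<and> j-1 = p)"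
  using assms unfolding W_mem by auto

lemma b2:
  assumes "m \<ge> 4" "i < m" "j < m"
  shows "{i,j} \<in> wheel_edges (m+1) \<longleftrightarrow> {i,j} \<in> wheel_edges m \<and> \<not> (i = m-1 \<and> j = 1 \<or> i = 1 \<and> j = m-1)"
  using assms unfolding W_mem by auto

lemma c11:
  assumes "m \<ge> 4" "1 \<le> p" "p+1 < m" "j \<le> p"
  shows "{p+1,j} \<in> wheel_edges (m+1) \<longleftrightarrow> j = 0 \<or> j = p \<or> j = p+1"
  using assms unfolding W_mem by auto

lemma c12:
  assumes "m \<ge> 4" "1 \<le> p" "p+1 < m" "p+2 \<le> j" "j < m+1"
  shows "{p+1,j} \<in> wheel_edges (m+1) \<longleftrightarrow> j-1 = 0 \<or> j-1 = p \<or> j-1 = p+1"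
  using assms unfolding W_mem by auto

lemma c2:
  assumes "m \<ge> 4" "j < m"
  shows "{m,j} \<in> wheel_edges (m+1) \<longleftrightarrow> j = 0 \<or> j = m - 1 \<or> j = 1"
  using assms unfolding W_mem by auto

lemma W_irr: "m \<ge> 4 \<Longrightarrow> {i,i} \<notin> wheel_edges m"
  unfolding W_mem by auto

lemma W_tri: "m \<ge> 5 \<Longrightarrow> {x,y} \<in> wheel_edges m \<Longrightarrow> {y,z} \<in> wheel_edges m \<Longrightarrow> {x,z} \<in> wheel_edges m
  \<Longrightarrow> x \<noteq> 0 \<Longrightarrow> y \<noteq> 0 \<Longrightarrow> z \<noteq> 0 \<Longrightarrow> False"
  unfolding W_mem by auto

lemma W_nb: "{q,t} \<in> wheel_edges m \<Longrightarrow> q \<noteq> 0 \<Longrightarrow> t \<noteq> 0 \<Longrightarrow>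
   t = (if q+1 < m then q+1 else 1) \<or> t = (if q \<ge> 2 then q - 1 else m - 1)"
  unfolding W_mem by auto

lemma W_nb2: "m \<ge> 4 \<Longrightarrow> 1 \<le> q \<Longrightarrow> q < m \<Longrightarrow>
   {q, if q+1 < m then q+1 else 1} \<in> wheel_edges m \<and> {q, if q \<ge> 2 then q - 1 else m - 1} \<in> wheel_edges m
   \<and> (if q+1 < m then q+1 else 1) \<noteq> (if q \<ge> 2 then q - 1 else m - 1)
   \<and> (if q+1 < m then q+1 else 1) \<noteq> 0 \<and> (if q \<ge> 2 then q - 1 else m - 1) \<noteq> 0
   \<and> (if q+1 < m then q+1 else 1) \<noteq> q \<and> (if q \<ge> 2 then q - 1 else m - 1) \<noteq> q
   \<and> (if q+1 < m then q+1 else 1) < m \<and> (if q \<ge> 2 then q - 1 else m - 1) < m"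
  unfolding W_mem by auto

lemma W_other: "m \<ge> 4 \<Longrightarrow> {q,t} \<in> wheel_edges m \<Longrightarrow> q \<noteq> 0 \<Longrightarrow> t \<noteq> 0 \<Longrightarrow>
   \<exists>s. s < m \<and> s \<noteq> 0 \<and> s \<noteq> t \<and> s \<noteq> q \<and> {q,s} \<in> wheel_edges m"
proof -
  assume a: "m \<ge> 4" "{q,t} \<in> wheel_edges m" "q \<noteq> 0" "t \<noteq> 0"
  have q: "1 \<le> q" "q < m" using a W_mem by auto
  note n = W_nb2[OF a(1) q]
  from W_nb[OF a(2-4)] show ?thesis
  proof
    assume "t = (if q+1 < m then q+1 else 1)"
    then show ?thesis using n by (intro exI[of _ "if q \<ge> 2 then q - 1 else m - 1"]) simp
  next
    assume "t = (if q \<ge> 2 then q - 1 else m - 1)"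
    then show ?thesis using n by (intro exI[of _ "if q+1 < m then q+1 else 1"]) simp
  qed
qed

lemma W_rim: "{p,q} \<in> wheel_edges m \<Longrightarrow> p \<noteq> 0 \<Longrightarrow> q \<noteq> 0 \<Longrightarrow>
   \<exists>r. 1 \<le> r \<and> r < m \<and> (p = r \<and> q = (if r+1 < m then r+1 else 1) \<or> q = r \<and> p = (if r+1 < m then r+1 else 1))"
proof -
  assume a: "{p,q} \<in> wheel_edges m" "p \<noteq> 0" "q \<noteq> 0"
  have "(1 \<le> p \<and> q = p+1 \<and> q < m) \<or> (1 \<le> q \<and> p = q+1 \<and> p < m) \<or> (p = m - 1 \<and> q = 1) \<or> (p = 1 \<and> q = m - 1)"
    using a unfolding W_mem by auto
  then show ?thesis
  proof (elim disjE)
    assume "1 \<le> p \<and> q = p+1 \<and> q < m" then show ?thesis by (intro exI[of _ p]) auto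
  next
    assume "1 \<le> q \<and> p = q+1 \<and> p < m" then show ?thesis by (intro exI[of _ q]) auto
  next
    assume "p = m - 1 \<and> q = 1" then show ?thesis using a by (intro exI[of _ p]) auto
  next
    assume "p = 1 \<and> q = m - 1" then show ?thesis using a by (intro exI[of _ q]) auto
  qed
qed

lemma W4: "i < 4 \<Longrightarrow> j < 4 \<Longrightarrow> {i,j} \<in> wheel_edges 4 \<longleftrightarrow> i \<noteq> j"
  unfolding W_mem by auto

lemma W_lt: "m \<ge> 2 \<Longrightarrow> {i,j} \<in> wheel_edges m \<Longrightarrow> i < m \<and> j < m"
  unfolding W_mem by auto


lemma ins_nov:
  assumes m4: "m \<ge> 4" "1 \<le> p" and a: "p < m" "i < m+1" "j < m+1" "i \<noteq> p+1" "j \<noteq> p+1"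
  shows "{i,j} \<in> wheel_edges (m+1) \<longleftrightarrow>
    {if i \<le> p then i else i - 1, if j \<le> p then j else j - 1} \<in> wheel_edges m \<and>
    \<not> ((if i \<le> p then i else i - 1) = p \<and> (if j \<le> p then j else j - 1) = (if p+1 < m then p+1 else 1) \<or>
       (if i \<le> p then i else i - 1) = (if p+1 < m then p+1 else 1) \<and> (if j \<le> p then j else j - 1) = p)"
proof (cases "p+1 < m")
  case True
  consider "i \<le> p" "j \<le> p" | "i \<le> p" "p+2 \<le> j" | "p+2 \<le> i" "j \<le> p" | "p+2 \<le> i" "p+2 \<le> j"
    using a by linarith
  then show ?thesis
  proof cases
    case 1 then show ?thesis using b11[OF m4 True, of i j] True by simp
  next
    case 2 then show ?thesis using b12[OF m4 True, of i j] True a by simp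
  next
    case 3
    have "{i,j} = {j,i}" by (rule insert_commute)
    moreover have "{i-1,j} = {j,i-1}" by (rule insert_commute)
    ultimately show ?thesis using 3 b12[OF m4 True, of j i] True a by auto
  next
    case 4 then show ?thesis using b22[OF m4 True, of i j] True a by simp
  qed
next
  case False
  then have pm: "p = m - 1" using a by simp
  then have "i < m" "j < m" "i \<le> p" "j \<le> p" using a by auto
  then show ?thesis using b2[OF m4(1), of i j] False pm by simp
qed

lemma ins_v:
  assumes m4: "m \<ge> 4" "1 \<le> p" and a: "p < m" "j < m+1" "j \<noteq> p+1"
  shows "{p+1,j} \<in> wheel_edges (m+1) \<longleftrightarrow>
    (if j \<le> p then j else j - 1) = 0 \<or> (if j \<le> p then j else j - 1) = p \<or>
    (if j \<le> p then j else j - 1) = (if p+1 < m then p+1 else 1)"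
proof (cases "p+1 < m")
  case True
  show ?thesis
  proof (cases "j \<le> p")
    case True then show ?thesis using c11[OF m4 \<open>p+1<m\<close>, of j] \<open>p+1<m\<close> by simp
  next
    case False then show ?thesis using c12[OF m4 \<open>p+1<m\<close>, of j] \<open>p+1<m\<close> a by simp
  qed
next
  case False
  then have pm: "p + 1 = m" using a by simp
  then have "j < m" "j \<le> p" using a by auto
  then show ?thesis using c2[OF m4(1), of j] False pm by auto
qed



definition nbr :: "'a set set \<Rightarrow> 'a \<Rightarrow> 'a set" where "nbr E v = {u. {v,u} \<in> E}"
definition tri :: "'a set set \<Rightarrow> bool" where
  "tri E \<longleftrightarrow> (\<forall>x y. {x,y} \<in> E \<longrightarrow> (\<exists>z. {x,z} \<in> E \<and> {y,z} \<in> E))"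
definition wiso :: "'a set \<Rightarrow> 'a set set \<Rightarrow> nat \<Rightarrow> bool" where
  "wiso V E n \<longleftrightarrow> (\<exists>g. bij_betw g {0..<n} V \<and>
      (\<forall>i<n. \<forall>j<n. {g i, g j} \<in> E \<longleftrightarrow> {i,j} \<in> wheel_edges n))"

lemma sg_edge_ex: "simple_graph V E \<Longrightarrow> e \<in> E \<Longrightarrow> \<exists>x y. e = {x,y} \<and> x \<noteq> y \<and> x \<in> V \<and> y \<in> V"
  unfolding simple_graph_def by blast

lemma sg_edge: "simple_graph V E \<Longrightarrow> {x,y} \<in> E \<Longrightarrow> x \<noteq> y \<and> x \<in> V \<and> y \<in> V"
  by (drule (1) sg_edge_ex) (auto simp: doubleton_eq_iff)

lemma sg_finE: "simple_graph V E \<Longrightarrow> finite E"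
proof -
  assume s: "simple_graph V E"
  have "E \<subseteq> Pow V" using sg_edge_ex[OF s] by blast
  moreover have "finite V" using s unfolding simple_graph_def by blast
  ultimately show ?thesis by (meson finite_Pow_iff finite_subset)
qed

lemma wiso_graph_iso: "wiso V E n \<Longrightarrow> graph_iso V E {0..<n} (wheel_edges n)"
proof -
  assume "wiso V E n"
  then obtain g where b: "bij_betw g {0..<n} V" and i: "\<forall>i<n. \<forall>j<n. {g i, g j} \<in> E \<longleftrightarrow> {i,j} \<in> wheel_edges n"
    unfolding wiso_def by blast
  define f where "f = inv_into {0..<n} g"
  have bf: "bij_betw f V {0..<n}" unfolding f_def by (rule bij_betw_inv_into[OF b])
  have "\<forall>u\<in>V. \<forall>v\<in>V. {u, v} \<in> E \<longleftrightarrow> {f u, f v} \<in> wheel_edges n"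
  proof (intro ballI)
    fix u v assume u: "u \<in> V" and v: "v \<in> V"
    have gu: "g (f u) = u" "g (f v) = v" using u v b unfolding f_def
      by (auto simp: bij_betw_def f_inv_into_f)
    have "f u < n" "f v < n" using u v bf by (auto simp: bij_betw_def)
    then show "{u, v} \<in> E \<longleftrightarrow> {f u, f v} \<in> wheel_edges n" using i gu by metis
  qed
  then show ?thesis using bf unfolding graph_iso_def by blast
qed

lemma card_W: assumes "n \<ge> 4" shows "card (wheel_edges n) = 2*n - 2"
proof -
  have e1: "{{0,i}|i. 1 \<le> i \<and> i < n} = (\<lambda>i. {0,i}) ` {1..<n}" by auto
  have e2: "{{i,i+1}|i. 1 \<le> i \<and> i + 1 < n} = (\<lambda>i. {i,i+1}) ` {1..<n-1}"
    unfolding setcompr_eq_image by (rule arg_cong[where f="image _"]) auto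
  have eq: "wheel_edges n = (\<lambda>i. {0,i}) ` {1..<n} \<union> (\<lambda>i. {i,i+1}) ` {1..<n-1} \<union> {{n-1,1}}"
    unfolding wheel_edges_def e1 e2 by simp
  have c1: "card ((\<lambda>i. {0,i}) ` {1..<n}) = n - 1"
    by (subst card_image) (auto simp: inj_on_def doubleton_eq_iff)
  have c2: "card ((\<lambda>i. {i,i+1}) ` {1..<n-1}) = n - 2"
    by (subst card_image) (auto simp: inj_on_def doubleton_eq_iff)
  have d1: "(\<lambda>i. {0,i}) ` {1..<n} \<inter> (\<lambda>i. {i,i+1}) ` {1..<n-1} = {}"
    by (auto simp: doubleton_eq_iff)
  have d2: "{n-1,1} \<notin> (\<lambda>i. {0,i}) ` {1..<n} \<union> (\<lambda>i. {i,i+1}) ` {1..<n-1}"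
    using assms by (auto simp: doubleton_eq_iff)
  have "card ((\<lambda>i. {0,i}) ` {1..<n} \<union> (\<lambda>i. {i,i+1}) ` {1..<n-1}) = (n-1) + (n-2)"
    using c1 c2 d1 by (simp add: card_Un_disjoint)
  then show ?thesis unfolding eq using d2 assms by simp
qed

lemma W_pair: "w \<in> wheel_edges n \<Longrightarrow> \<exists>i j. w = {i,j}"
  unfolding wheel_edges_def by auto

lemma iso_card:
  assumes s: "simple_graph V E" and gi: "graph_iso V E {0..<n} (wheel_edges n)" and n4: "n \<ge> 4"
  shows "card E = card (wheel_edges n)"
proof -
  obtain f where bf: "bij_betw f V {0..<n}" and i: "\<forall>u\<in>V. \<forall>v\<in>V. {u, v} \<in> E \<longleftrightarrow> {f u, f v} \<in> wheel_edges n"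
    using gi unfolding graph_iso_def by blast
  have inj: "inj_on f V" and im: "f ` V = {0..<n}" using bf by (auto simp: bij_betw_def)
  have "bij_betw (image f) E (wheel_edges n)"
    unfolding bij_betw_def
  proof (intro conjI)
    show "inj_on ((`) f) E"
    proof (rule inj_onI)
      fix e1 e2 assume "e1 \<in> E" "e2 \<in> E" "f ` e1 = f ` e2"
      moreover have "e1 \<subseteq> V" "e2 \<subseteq> V" using sg_edge_ex[OF s \<open>e1 \<in> E\<close>] sg_edge_ex[OF s \<open>e2 \<in> E\<close>] by auto
      ultimately show "e1 = e2" using inj_on_image_eq_iff[OF inj] by blast
    qed
    show "(`) f ` E = wheel_edges n"
    proof
      show "(`) f ` E \<subseteq> wheel_edges n"
      proof
        fix w assume "w \<in> (`) f ` E"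
        then obtain e where e: "e \<in> E" "w = f ` e" by blast
        then obtain x y where "e = {x,y}" "x \<in> V" "y \<in> V" using sg_edge_ex[OF s] by blast
        then show "w \<in> wheel_edges n" using e i by auto
      qed
      show "wheel_edges n \<subseteq> (`) f ` E"
      proof
        fix w assume w: "w \<in> wheel_edges n"
        then obtain p q where pq: "w = {p,q}" using W_pair by blast
        then have "p < n" "q < n" using W_lt w n4 by auto
        then have "p \<in> f ` V" "q \<in> f ` V" using im by auto
        then obtain x y where xy: "x \<in> V" "y \<in> V" "f x = p" "f y = q" by blast
        then have "{x,y} \<in> E" using i w pq by auto
        moreover have "w = f ` {x,y}" using pq xy by auto
        ultimately show "w \<in> (`) f ` E" by blast
      qed
    qed
  qed
  then show ?thesis by (rule bij_betw_same_card)
qed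

lemma deg3:
  assumes s: "simple_graph V E" and k: "k_connected 3 V E" and v: "v \<in> V"
  shows "3 \<le> card (nbr E v)"
proof (rule ccontr)
  assume "\<not> 3 \<le> card (nbr E v)"
  then have c: "card (nbr E v) < 3" by simp
  have NV: "nbr E v \<subseteq> V" using sg_edge[OF s] unfolding nbr_def by blast
  have fV: "finite V" using s unfolding simple_graph_def by blast
  have vN: "v \<notin> nbr E v" using sg_edge[OF s] unfolding nbr_def by blast
  have conn: "connected_on E (V - nbr E v)"
  proof -
    have "\<forall>S. S \<subseteq> V \<and> card S < 3 \<longrightarrow> connected_on E (V - S)" using k unfolding k_connected_def by (rule conjunct2)
    then show ?thesis using c NV by blast
  qed
  have fN: "finite (nbr E v)" using fV NV finite_subset by blast
  have ci: "card (insert v (nbr E v)) \<le> 3" using fN vN c by simp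
  have "card V > 3" using k unfolding k_connected_def by blast
  have "\<not> V \<subseteq> insert v (nbr E v)"
  proof
    assume "V \<subseteq> insert v (nbr E v)"
    then have "card V \<le> card (insert v (nbr E v))" using fN by (intro card_mono) simp_all
    then show False using ci \<open>card V > 3\<close> by simp
  qed
  then obtain w where w: "w \<in> V" "w \<notin> insert v (nbr E v)" by blast
  let ?R = "\<lambda>x y. x \<in> V - nbr E v \<and> y \<in> V - nbr E v \<and> {x, y} \<in> E"
  have vV: "v \<in> V - nbr E v" using v vN by blast
  have wV: "w \<in> V - nbr E v" using w by blast
  have allR: "\<forall>u\<in>V - nbr E v. \<forall>x\<in>V - nbr E v. ?R\<^sup>*\<^sup>* u x" using conn unfolding connected_on_def .
  have "?R\<^sup>*\<^sup>* v w" using allR vV wV by blast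
  then show False
  proof (cases rule: converse_rtranclpE)
    case base then show ?thesis using w by blast
  next
    case (step y) then show ?thesis by (simp add: nbr_def)
  qed
qed

lemma handshake:
  assumes s: "simple_graph V E"
  shows "(\<Sum>v\<in>V. card (nbr E v)) = 2 * card E"
proof -
  have fV: "finite V" using s unfolding simple_graph_def by blast
  have fE: "finite E" using sg_finE[OF s] .
  have c1: "card (nbr E v) = card {e\<in>E. v \<in> e}" if v: "v \<in> V" for v
  proof (rule bij_betw_same_card)
    show "bij_betw (\<lambda>u. {v,u}) (nbr E v) {e\<in>E. v \<in> e}"
      unfolding bij_betw_def
    proof (intro conjI)
      show "inj_on (\<lambda>u. {v,u}) (nbr E v)"
        unfolding inj_on_def nbr_def using sg_edge[OF s] by (auto simp: doubleton_eq_iff)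
      show "(\<lambda>u. {v,u}) ` nbr E v = {e\<in>E. v \<in> e}"
      proof
        show "(\<lambda>u. {v,u}) ` nbr E v \<subseteq> {e\<in>E. v \<in> e}" unfolding nbr_def by auto
        show "{e\<in>E. v \<in> e} \<subseteq> (\<lambda>u. {v,u}) ` nbr E v"
        proof
          fix e assume e: "e \<in> {e\<in>E. v \<in> e}"
          then obtain x y where xy: "e = {x,y}" using sg_edge_ex[OF s] by blast
          show "e \<in> (\<lambda>u. {v,u}) ` nbr E v"
          proof (cases "v = x")
            case True then show ?thesis using e xy unfolding nbr_def by auto
          next
            case False then have "v = y" using e xy by auto
            then show ?thesis using e xy unfolding nbr_def by (auto simp: insert_commute)
          qed
        qed
      qed
    qed
  qed
  have "(\<Sum>v\<in>V. card (nbr E v)) = (\<Sum>v\<in>V. \<Sum>e\<in>E. if v \<in> e then 1 else 0)"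
  proof (rule sum.cong[OF refl])
    fix v assume "v \<in> V"
    then have "card (nbr E v) = card {e\<in>E. v \<in> e}" by (rule c1)
    also have "\<dots> = (\<Sum>e\<in>{e\<in>E. v \<in> e}. 1)" by simp
    also have "\<dots> = (\<Sum>e\<in>E. if v \<in> e then 1 else 0)" by (rule sum.inter_filter[OF fE])
    finally show "card (nbr E v) = (\<Sum>e\<in>E. if v \<in> e then 1 else 0)" .
  qed
  also have "\<dots> = (\<Sum>e\<in>E. \<Sum>v\<in>V. if v \<in> e then 1 else 0)" by (rule sum.swap)
  also have "\<dots> = (\<Sum>e\<in>E. 2)"
  proof (rule sum.cong[OF refl])
    fix e assume e: "e \<in> E"
    then obtain x y where xy: "e = {x,y}" "x \<noteq> y" "x \<in> V" "y \<in> V" using sg_edge_ex[OF s] by blast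
    have "(\<Sum>v\<in>V. if v \<in> e then 1 else 0) = (\<Sum>v\<in>{v\<in>V. v \<in> e}. 1::nat)" by (rule sum.inter_filter[OF fV, symmetric])
    also have "{v\<in>V. v \<in> e} = {x,y}" using xy by auto
    finally show "(\<Sum>v\<in>V. if v \<in> e then 1 else 0) = (2::nat)" using xy by simp
  qed
  also have "\<dots> = 2 * card E" by simp
  finally show ?thesis .
qed


lemma conn_reroute:
  assumes conn: "connected_on E U" and vU: "v \<in> U"
    and nb: "\<And>x y. {v,x} \<in> E \<Longrightarrow> {v,y} \<in> E \<Longrightarrow> x \<noteq> y \<Longrightarrow> {x,y} \<in> E'"
    and sub: "\<And>e. e \<in> E \<Longrightarrow> v \<notin> e \<Longrightarrow> e \<in> E'"
    and irr: "{v,v} \<notin> E"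
  shows "connected_on E' (U - {v})"
  unfolding connected_on_def
proof (intro ballI)
  fix x y assume x: "x \<in> U - {v}" and y: "y \<in> U - {v}"
  let ?R = "\<lambda>x y. x \<in> U \<and> y \<in> U \<and> {x, y} \<in> E"
  let ?R' = "\<lambda>x y. x \<in> U - {v} \<and> y \<in> U - {v} \<and> {x, y} \<in> E'"
  have allR: "\<forall>u\<in>U. \<forall>w\<in>U. ?R\<^sup>*\<^sup>* u w" using conn unfolding connected_on_def .
  have Rxy: "?R\<^sup>*\<^sup>* x y" using allR x y by blast
  have key: "(z \<noteq> v \<longrightarrow> ?R'\<^sup>*\<^sup>* x z) \<and> (z = v \<longrightarrow> (\<exists>w. w \<in> U - {v} \<and> {v,w} \<in> E \<and> ?R'\<^sup>*\<^sup>* x w))"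
    if "?R\<^sup>*\<^sup>* x z" for z
    using that
  proof (induction rule: rtranclp_induct)
    case base then show ?case using x by auto
  next
    case (step y z)
    from step.hyps(2) have yz: "y \<in> U" "z \<in> U" "{y,z} \<in> E" by auto
    show ?case
    proof (cases "z = v")
      case True
      then have yv: "y \<noteq> v" using yz irr by auto
      then have "?R'\<^sup>*\<^sup>* x y" using step.IH by blast
      moreover have "{v,y} \<in> E" using yz True by (simp add: insert_commute)
      ultimately show ?thesis using True yz yv by auto
    next
      case False
      show ?thesis
      proof (cases "y = v")
        case True
        then obtain w where w: "w \<in> U - {v}" "{v,w} \<in> E" "?R'\<^sup>*\<^sup>* x w" using step.IH by blast
        have vz: "{v,z} \<in> E" using yz True by simp
        show ?thesis
        proof (cases "w = z")
          case True then show ?thesis using w False by simp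
        next
          case wz: False
          have "{w,z} \<in> E'" using nb[OF w(2) vz wz] .
          then have "?R' w z" using w yz False by simp
          with w(3) have "?R'\<^sup>*\<^sup>* x z" by (rule rtranclp.rtrancl_into_rtrancl)
          then show ?thesis using False by simp
        qed
      next
        case yv: False
        have Rxy': "?R'\<^sup>*\<^sup>* x y" using step.IH yv by blast
        have "{y,z} \<in> E'" using sub[OF yz(3)] yv False by simp
        then have "?R' y z" using yz yv False by simp
        with Rxy' have "?R'\<^sup>*\<^sup>* x z" by (rule rtranclp.rtrancl_into_rtrancl)
        then show ?thesis using False by simp
      qed
    qed
  qed
  show "?R'\<^sup>*\<^sup>* x y" using key[OF Rxy] y by blast
qed

lemma reduce:
  assumes s: "simple_graph V E" and k: "k_connected 3 V E" and t: "tri E" and v: "v \<in> V"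
    and Nv: "nbr E v = {a,b,c}" and d: "a \<noteq> b" "a \<noteq> c" "b \<noteq> c" and ab: "{a,b} \<in> E" and bc: "{b,c} \<in> E"
    and n5: "card V \<ge> 5"
  shows "simple_graph (V - {v}) ({e\<in>E. v \<notin> e} \<union> {{a,c}}) \<and> k_connected 3 (V - {v}) ({e\<in>E. v \<notin> e} \<union> {{a,c}})
     \<and> tri ({e\<in>E. v \<notin> e} \<union> {{a,c}}) \<and> card E = card ({e\<in>E. v \<notin> e} \<union> {{a,c}}) + (if {a,c} \<in> E then 3 else 2)"
proof -
  define E0 where "E0 = {e\<in>E. v \<notin> e}"
  define E' where "E' = E0 \<union> {{a,c}}"
  have fV: "finite V" using s unfolding simple_graph_def by blast
  have fE: "finite E" using sg_finE[OF s] .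
  have inN: "a \<in> nbr E v" "b \<in> nbr E v" "c \<in> nbr E v" using Nv by auto
  then have va: "{v,a} \<in> E" "{v,b} \<in> E" "{v,c} \<in> E" unfolding nbr_def by auto
  have aV: "a \<in> V" "b \<in> V" "c \<in> V" "a \<noteq> v" "b \<noteq> v" "c \<noteq> v" using sg_edge[OF s va(1)] sg_edge[OF s va(2)] sg_edge[OF s va(3)] by auto
  have nbE: "x \<in> {a,b,c}" if "{v,x} \<in> E" for x using that Nv unfolding nbr_def by blast
  have pairs: "{x,y} \<in> E'" if "x \<in> {a,b,c}" "y \<in> {a,b,c}" "x \<noteq> y" for x y
  proof -
    have "{a,b} \<in> E'" "{b,c} \<in> E'" "{a,c} \<in> E'" using ab bc aV unfolding E'_def E0_def by auto
    then show ?thesis using that by (auto simp: insert_commute)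
  qed
  have sE': "simple_graph (V - {v}) E'"
    unfolding simple_graph_def
  proof (intro conjI ballI)
    show "finite (V - {v})" using fV by simp
    fix e assume "e \<in> E'"
    then show "\<exists>x y. x \<noteq> y \<and> x \<in> V - {v} \<and> y \<in> V - {v} \<and> e = {x, y}"
    proof (cases "e = {a,c}")
      case True then show ?thesis using aV d by blast
    next
      case False
      then have e: "e \<in> E" "v \<notin> e" using \<open>e \<in> E'\<close> unfolding E'_def E0_def by auto
      then obtain x y where "e = {x,y}" "x \<noteq> y" "x \<in> V" "y \<in> V" using sg_edge_ex[OF s] by blast
      then show ?thesis using e by blast
    qed
  qed
  have tE': "tri E'"
    unfolding tri_def
  proof (intro allI impI)
    fix x y assume xy: "{x,y} \<in> E'"
    show "\<exists>z. {x,z} \<in> E' \<and> {y,z} \<in> E'"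
    proof (cases "{x,y} = {a,c}")
      case True
      then have "x \<in> {a,b,c}" "y \<in> {a,b,c}" "b \<noteq> x" "b \<noteq> y" using d by (auto simp: doubleton_eq_iff)
      then show ?thesis using pairs[of x b] pairs[of y b] by auto
    next
      case False
      then have e: "{x,y} \<in> E" "v \<noteq> x" "v \<noteq> y" using xy unfolding E'_def E0_def by auto
      obtain z where z: "{x,z} \<in> E" "{y,z} \<in> E" using t e(1) unfolding tri_def by blast
      show ?thesis
      proof (cases "z = v")
        case False
        then have "{x,z} \<in> E'" "{y,z} \<in> E'" using z e unfolding E'_def E0_def by auto
        then show ?thesis by blast
      next
        case True
        then have "x \<in> {a,b,c}" "y \<in> {a,b,c}" using z nbE by (auto simp: insert_commute)
        moreover have "x \<noteq> y" using sg_edge[OF s e(1)] by blast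
        moreover obtain z' where "z' \<in> {a,b,c}" "z' \<noteq> x" "z' \<noteq> y" using d by blast
        ultimately show ?thesis using pairs[of x z'] pairs[of y z'] by auto
      qed
    qed
  qed
  have kE': "k_connected 3 (V - {v}) E'"
    unfolding k_connected_def
  proof (intro conjI allI impI)
    show "3 < card (V - {v})" using n5 v fV by simp
    fix S assume S: "S \<subseteq> V - {v} \<and> card S < 3"
    have "\<forall>S. S \<subseteq> V \<and> card S < 3 \<longrightarrow> connected_on E (V - S)" using k unfolding k_connected_def by (rule conjunct2)
    then have cS: "connected_on E (V - S)" using S by blast
    have "connected_on E' (V - S - {v})"
    proof (rule conn_reroute[OF cS])
      show "v \<in> V - S" using S v by blast
      show "{x,y} \<in> E'" if "{v,x} \<in> E" "{v,y} \<in> E" "x \<noteq> y" for x y using pairs[OF nbE[OF that(1)] nbE[OF that(2)] that(3)] .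
      show "e \<in> E'" if "e \<in> E" "v \<notin> e" for e using that unfolding E'_def E0_def by blast
      show "{v,v} \<notin> E" using sg_edge[OF s] by blast
    qed
    moreover have "V - S - {v} = V - {v} - S" by blast
    ultimately show "connected_on E' (V - {v} - S)" by simp
  qed
  have Ev: "{e\<in>E. v \<in> e} = {{v,a},{v,b},{v,c}}"
  proof
    show "{e\<in>E. v \<in> e} \<subseteq> {{v,a},{v,b},{v,c}}"
    proof
      fix e assume e: "e \<in> {e\<in>E. v \<in> e}"
      then obtain x y where xy: "e = {x,y}" using sg_edge_ex[OF s] by blast
      show "e \<in> {{v,a},{v,b},{v,c}}"
      proof (cases "x = v")
        case True then have "y \<in> {a,b,c}" using nbE e xy by auto
        then show ?thesis using xy True by auto
      next
        case False then have "y = v" using e xy by auto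
        then have "x \<in> {a,b,c}" using nbE e xy by (auto simp: insert_commute)
        then show ?thesis using xy \<open>y = v\<close> by (auto simp: insert_commute)
      qed
    qed
    show "{{v,a},{v,b},{v,c}} \<subseteq> {e\<in>E. v \<in> e}" using va by auto
  qed
  have cEv: "card {e\<in>E. v \<in> e} = 3" unfolding Ev using d aV by (simp add: doubleton_eq_iff)
  have fE0: "finite E0" unfolding E0_def using fE by simp
  have Eeq: "E = E0 \<union> {e\<in>E. v \<in> e}" unfolding E0_def by blast
  have dj: "E0 \<inter> {e\<in>E. v \<in> e} = {}" unfolding E0_def by blast
  have "card E = card (E0 \<union> {e\<in>E. v \<in> e})" using Eeq by simp
  also have "\<dots> = card E0 + card {e\<in>E. v \<in> e}" using fE0 fE dj by (intro card_Un_disjoint) auto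
  finally have cE: "card E = card E0 + 3" using cEv by simp
  have acE0: "{a,c} \<in> E0 \<longleftrightarrow> {a,c} \<in> E" unfolding E0_def using aV by auto
  have cE': "card E' = card E0 + (if {a,c} \<in> E then 0 else 1)"
    unfolding E'_def using fE0 acE0 by (simp add: card_insert_if)
  have "card E = card E' + (if {a,c} \<in> E then 3 else 2)" using cE cE' by simp
  then show ?thesis using sE' kE' tE' unfolding E'_def E0_def by blast
qed



lemma base4:
  assumes s: "simple_graph V E" and k: "k_connected 3 V E" and c4: "card V = 4"
  shows "wiso V E 4"
proof -
  have fV: "finite V" using s unfolding simple_graph_def by blast
  obtain xs where xs: "set xs = V" "distinct xs" using finite_distinct_list[OF fV] by blast
  have lxs: "length xs = 4" using xs c4 distinct_card by fastforce
  have complete: "{x,y} \<in> E" if "x \<in> V" "y \<in> V" "x \<noteq> y" for x y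
  proof -
    have NV: "nbr E x \<subseteq> V - {x}" using sg_edge[OF s] unfolding nbr_def by blast
    have "card (V - {x}) = 3" using c4 that fV by simp
    moreover have "3 \<le> card (nbr E x)" using deg3[OF s k that(1)] .
    ultimately have "nbr E x = V - {x}" using NV fV by (intro card_seteq) auto
    then show ?thesis using that unfolding nbr_def by blast
  qed
  have b: "bij_betw ((!) xs) {0..<4} V" using bij_betw_nth[OF xs(2)] xs lxs by (simp add: atLeast0LessThan)
  have "\<forall>i<4. \<forall>j<4. {xs ! i, xs ! j} \<in> E \<longleftrightarrow> {i,j} \<in> wheel_edges 4"
  proof (intro allI impI)
    fix i j :: nat assume ij: "i < 4" "j < 4"
    have in1: "xs ! i \<in> V" "xs ! j \<in> V" using ij xs lxs by auto
    have "xs ! i = xs ! j \<longleftrightarrow> i = j" using ij xs(2) lxs by (simp add: nth_eq_iff_index_eq)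
    then show "{xs ! i, xs ! j} \<in> E \<longleftrightarrow> {i,j} \<in> wheel_edges 4"
      using W4[OF ij] complete[OF in1] sg_edge[OF s, of "xs ! i" "xs ! j"] by auto
  qed
  then show ?thesis unfolding wiso_def using b by blast
qed

lemma insert_wheel:
  fixes g' :: "nat \<Rightarrow> 'a"
  assumes m4: "m \<ge> 4" and bij: "bij_betw g' {0..<m} V'"
    and iso: "\<And>i j. i < m \<Longrightarrow> j < m \<Longrightarrow> {g' i, g' j} \<in> E' \<longleftrightarrow> {i,j} \<in> wheel_edges m"
    and sub: "\<And>e. e \<in> E' \<Longrightarrow> e \<subseteq> V'"
    and p: "1 \<le> p" "p < m" and q: "q = (if p+1 < m then p+1 else 1)"
    and v: "v \<notin> V'"
    and E: "E = (E' - {{g' p, g' q}}) \<union> {{v, g' p}, {v, g' 0}, {v, g' q}}"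
  shows "wiso (insert v V') E (m+1)"
proof -
  define h where "h i = (if i \<le> p then i else i - 1)" for i :: nat
  define g where "g i = (if i = p+1 then v else g' (h i))" for i
  have inj': "inj_on g' {0..<m}" and im': "g' ` {0..<m} = V'" using bij by (auto simp: bij_betw_def)
  have g'V: "g' i \<in> V'" if "i < m" for i using im' that by auto
  have g'eq: "g' i = g' j \<longleftrightarrow> i = j" if "i < m" "j < m" for i j using inj' that by (auto simp: inj_on_def)
  have hlt: "h i < m" if "i < m+1" "i \<noteq> p+1" for i using that p unfolding h_def by auto
  have gv: "v \<noteq> g' i" if "i < m" for i using g'V[OF that] v by auto
  have qm: "q < m" "p \<noteq> q" using q p m4 by auto
  have b: "bij_betw g {0..<m+1} (insert v V')"
    unfolding bij_betw_def
  proof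
    show "inj_on g {0..<m+1}"
    proof (rule inj_onI)
      fix i j assume i: "i \<in> {0..<m+1}" and j: "j \<in> {0..<m+1}" and e: "g i = g j"
      show "i = j"
      proof (cases "i = p+1")
        case True
        show ?thesis
        proof (rule ccontr)
          assume "i \<noteq> j"
          then have "j \<noteq> p+1" using True by simp
          then show False using e True gv[OF hlt[of j]] j unfolding g_def by auto
        qed
      next
        case False
        show ?thesis
        proof (cases "j = p+1")
          case True then show ?thesis using e False gv[OF hlt[of i]] i unfolding g_def by auto
        next
          case jF: False
          then have "g' (h i) = g' (h j)" using e False unfolding g_def by simp
          then have "h i = h j" using g'eq hlt i j False jF by auto
          then show ?thesis using False jF unfolding h_def by (auto split: if_splits)
        qed
      qed
    qed
    show "g ` {0..<m+1} = insert v V'"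
    proof
      show "g ` {0..<m+1} \<subseteq> insert v V'" using g'V hlt unfolding g_def by auto
      show "insert v V' \<subseteq> g ` {0..<m+1}"
      proof
        fix x assume "x \<in> insert v V'"
        then show "x \<in> g ` {0..<m+1}"
        proof
          assume "x = v" then have "x = g (p+1)" unfolding g_def by simp
          then show ?thesis using p by auto
        next
          assume "x \<in> V'"
          then obtain k where k: "k < m" "x = g' k" using im' by auto
          define i where "i = (if k \<le> p then k else k+1)"
          have "i \<noteq> p+1" "h i = k" "i < m+1" unfolding i_def h_def using k by auto
          then have "g i = x" using k unfolding g_def by simp
          then show ?thesis using \<open>i < m+1\<close> by force
        qed
      qed
    qed
  qed
  have noE: "{x,y} \<in> E \<longleftrightarrow> {x,y} \<in> E' \<and> {x,y} \<noteq> {g' p, g' q}" if "x \<noteq> v" "y \<noteq> v" for x y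
    using that unfolding E by (auto simp: doubleton_eq_iff)
  have vE: "{v,y} \<in> E \<longleftrightarrow> y = g' p \<or> y = g' 0 \<or> y = g' q" if "y \<in> V'" for y
  proof -
    have "{v,y} \<notin> E'" using sub v by blast
    then show ?thesis unfolding E using that v by (auto simp: doubleton_eq_iff)
  qed
  have vv: "{v,v} \<notin> E"
  proof -
    have "{v,v} \<notin> E'" using sub v by blast
    moreover have "g' p \<noteq> v" "g' 0 \<noteq> v" "g' q \<noteq> v" using gv p qm m4 by auto
    ultimately show ?thesis unfolding E by (auto simp: doubleton_eq_iff)
  qed
  have edges: "{g i, g j} \<in> E \<longleftrightarrow> {i,j} \<in> wheel_edges (m+1)" if ij: "i < m+1" "j < m+1" for i j
  proof (cases "i = p+1")
    case True
    show ?thesis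
    proof (cases "j = p+1")
      case True
      then show ?thesis using \<open>i = p+1\<close> vv W_irr[of "m+1" "p+1"] m4 unfolding g_def by simp
    next
      case False
      have hj: "h j < m" using hlt ij False by simp
      have "{g i, g j} \<in> E \<longleftrightarrow> g' (h j) = g' p \<or> g' (h j) = g' 0 \<or> g' (h j) = g' q"
        using vE[OF g'V[OF hj]] True False unfolding g_def by simp
      also have "\<dots> \<longleftrightarrow> h j = p \<or> h j = 0 \<or> h j = q" using g'eq hj qm p by auto
      also have "\<dots> \<longleftrightarrow> {i,j} \<in> wheel_edges (m+1)"
        using ins_v[OF m4 p(1) p(2) ij(2) False] True q unfolding h_def by auto
      finally show ?thesis .
    qed
  next
    case iF: False
    show ?thesis
    proof (cases "j = p+1")
      case True
      have hi: "h i < m" using hlt ij iF by simp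
      have "{g i, g j} \<in> E \<longleftrightarrow> g' (h i) = g' p \<or> g' (h i) = g' 0 \<or> g' (h i) = g' q"
        using vE[OF g'V[OF hi]] True iF unfolding g_def by (simp add: insert_commute)
      also have "\<dots> \<longleftrightarrow> h i = p \<or> h i = 0 \<or> h i = q" using g'eq hi qm p by auto
      also have "\<dots> \<longleftrightarrow> {j,i} \<in> wheel_edges (m+1)"
        using ins_v[OF m4 p(1) p(2) ij(1) iF] True q unfolding h_def by auto
      finally show ?thesis by (simp add: insert_commute)
    next
      case jF: False
      have hi: "h i < m" "h j < m" using hlt ij iF jF by auto
      have "{g i, g j} \<in> E \<longleftrightarrow> {g' (h i), g' (h j)} \<in> E' \<and> {g' (h i), g' (h j)} \<noteq> {g' p, g' q}"
        using noE[of "g' (h i)" "g' (h j)"] gv hi iF jF unfolding g_def by auto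
      also have "\<dots> \<longleftrightarrow> {h i, h j} \<in> wheel_edges m \<and> \<not> (h i = p \<and> h j = q \<or> h i = q \<and> h j = p)"
        using iso[OF hi] g'eq hi qm p by (auto simp: doubleton_eq_iff)
      also have "\<dots> \<longleftrightarrow> {i,j} \<in> wheel_edges (m+1)"
        using ins_nov[OF m4 p(1) p(2) ij iF jF] q unfolding h_def by simp
      finally show ?thesis .
    qed
  qed
  show ?thesis unfolding wiso_def using b edges by blast
qed


lemma spoke_contra:
  fixes g' :: "nat \<Rightarrow> 'a"
  assumes m5: "m \<ge> 5" and bij: "bij_betw g' {0..<m} V'"
    and iso: "\<And>i j. i < m \<Longrightarrow> j < m \<Longrightarrow> {g' i, g' j} \<in> E' \<longleftrightarrow> {i,j} \<in> wheel_edges m"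
    and sub: "\<And>e. e \<in> E' \<Longrightarrow> e \<subseteq> V'" and v: "v \<notin> V'"
    and q: "1 \<le> q" "q < m" and t: "t < m" "t \<noteq> 0" and qt: "{q,t} \<in> wheel_edges m"
    and E: "E = (E' - {{g' 0, g' q}}) \<union> {{v, g' 0}, {v, g' t}, {v, g' q}}"
    and tr: "tri E"
  shows False
proof -
  have inj': "inj_on g' {0..<m}" and im': "g' ` {0..<m} = V'" using bij by (auto simp: bij_betw_def)
  have g'V: "g' i \<in> V'" if "i < m" for i using im' that by auto
  have g'eq: "g' i = g' j \<longleftrightarrow> i = j" if "i < m" "j < m" for i j using inj' that by (auto simp: inj_on_def)
  have m4: "m \<ge> 4" using m5 by simp
  obtain s where s: "s < m" "s \<noteq> 0" "s \<noteq> t" "s \<noteq> q" "{q,s} \<in> wheel_edges m"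
    using W_other[OF m4 qt] q t by auto
  have vE': "v \<notin> e" if "e \<in> E'" for e using sub[OF that] v by blast
  have "{g' q, g' s} \<in> E'" using iso[OF q(2) s(1)] s by simp
  moreover have "{g' q, g' s} \<noteq> {g' 0, g' q}" using g'eq s q m5 by (auto simp: doubleton_eq_iff)
  ultimately have e: "{g' q, g' s} \<in> E" unfolding E by blast
  obtain z where z: "{g' q, z} \<in> E" "{g' s, z} \<in> E" using tr e unfolding tri_def by blast
  show False
  proof (cases "z = v")
    case True
    have "{g' s, v} \<notin> E'" using vE' by blast
    then have "{g' s, v} \<in> {{v, g' 0}, {v, g' t}, {v, g' q}}" using z(2) True unfolding E by blast
    then have "g' s = g' 0 \<or> g' s = g' t \<or> g' s = g' q" by (auto simp: doubleton_eq_iff)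
    then show False using g'eq s t q m5 by auto
  next
    case False
    have gqv: "g' q \<noteq> v" "g' s \<noteq> v" using g'V q s v by auto
    have z1: "{g' q, z} \<in> E' - {{g' 0, g' q}}" using z(1) False gqv unfolding E by (auto simp: doubleton_eq_iff)
    have z2: "{g' s, z} \<in> E'" using z(2) False gqv unfolding E by (auto simp: doubleton_eq_iff)
    have "z \<in> V'" using sub z2 by blast
    then obtain w where w: "w < m" "z = g' w" using im' by auto
    have "w \<noteq> 0"
    proof
      assume "w = 0"
      then have "{g' q, z} = {g' 0, g' q}" using w by (simp add: insert_commute)
      then show False using z1 by blast
    qed
    moreover have "{q,w} \<in> wheel_edges m" using iso[OF q(2) w(1)] z1 w by simp
    moreover have "{s,w} \<in> wheel_edges m" using iso[OF s(1) w(1)] z2 w by simp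
    ultimately show False using W_tri[OF m5 s(5), of w] s q by simp
  qed
qed

lemma hub_case:
  fixes g' :: "nat \<Rightarrow> 'a"
  assumes m4: "m \<ge> 4" and bij: "bij_betw g' {0..<m} V'"
    and iso: "\<And>i j. i < m \<Longrightarrow> j < m \<Longrightarrow> {g' i, g' j} \<in> E' \<longleftrightarrow> {i,j} \<in> wheel_edges m"
    and sub: "\<And>e. e \<in> E' \<Longrightarrow> e \<subseteq> V'" and v: "v \<notin> V'"
    and a: "a \<in> V'" "c \<in> V'" "a \<noteq> g' 0" "c \<noteq> g' 0" "{a,c} \<in> E'"
    and E: "E = (E' - {{a,c}}) \<union> {{v,a},{v,g' 0},{v,c}}"
  shows "wiso (insert v V') E (m+1)"
proof -
  have im': "g' ` {0..<m} = V'" using bij by (auto simp: bij_betw_def)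
  obtain p where p: "p < m" "a = g' p" using a im' by auto
  obtain q where q: "q < m" "c = g' q" using a im' by auto
  have "p \<noteq> 0" using p(2) a(3) by metis
  moreover have "q \<noteq> 0" using q(2) a(4) by metis
  moreover have "{p,q} \<in> wheel_edges m" using iso[OF p(1) q(1)] p q a by simp
  ultimately obtain r where r: "1 \<le> r" "r < m"
    "p = r \<and> q = (if r+1 < m then r+1 else 1) \<or> q = r \<and> p = (if r+1 < m then r+1 else 1)"
    using W_rim by blast
  from r(3) show ?thesis
  proof
    assume h: "p = r \<and> q = (if r+1 < m then r+1 else 1)"
    have ar: "a = g' r" and cr: "c = g' (if r+1 < m then r+1 else 1)" using p q h by auto
    have E2: "E = (E' - {{g' r, g' (if r+1 < m then r+1 else 1)}}) \<union> {{v, g' r}, {v, g' 0}, {v, g' (if r+1 < m then r+1 else 1)}}"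
      by (rule E[unfolded ar cr])
    show ?thesis
      by (rule insert_wheel[OF m4 bij iso sub r(1) r(2) refl v]) (simp_all add: E2)
  next
    assume h: "q = r \<and> p = (if r+1 < m then r+1 else 1)"
    have e1: "{a,c} = {c,a}" by (rule insert_commute)
    have "E = (E' - {{c,a}}) \<union> {{v,c},{v,g' 0},{v,a}}" using E e1 by auto
    moreover have ar: "c = g' r" and cr: "a = g' (if r+1 < m then r+1 else 1)" using p q h by auto
    ultimately have E2: "E = (E' - {{g' r, g' (if r+1 < m then r+1 else 1)}}) \<union> {{v, g' r}, {v, g' 0}, {v, g' (if r+1 < m then r+1 else 1)}}"
      by simp
    show ?thesis
      by (rule insert_wheel[OF m4 bij iso sub r(1) r(2) refl v]) (simp_all add: E2)
  qed
qed

lemma finish: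
  fixes g' :: "nat \<Rightarrow> 'a"
  assumes m4: "m \<ge> 4" and bij: "bij_betw g' {0..<m} V'"
    and iso: "\<And>i j. i < m \<Longrightarrow> j < m \<Longrightarrow> {g' i, g' j} \<in> E' \<longleftrightarrow> {i,j} \<in> wheel_edges m"
    and sub: "\<And>e. e \<in> E' \<Longrightarrow> e \<subseteq> V'" and v: "v \<notin> V'"
    and abc: "a \<in> V'" "b \<in> V'" "c \<in> V'" "a \<noteq> b" "a \<noteq> c" "b \<noteq> c"
      "{a,c} \<in> E'" "{a,b} \<in> E'" "{b,c} \<in> E'"
    and E: "E = (E' - {{a,c}}) \<union> {{v,a},{v,b},{v,c}}" and tr: "tri E"
  shows "wiso (insert v V') E (m+1)"
proof -
  have im': "g' ` {0..<m} = V'" using bij by (auto simp: bij_betw_def)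
  have inj': "inj_on g' {0..<m}" using bij by (auto simp: bij_betw_def)
  obtain p where p: "p < m" "a = g' p" using abc im' by auto
  obtain q where q: "q < m" "c = g' q" using abc im' by auto
  obtain t where t: "t < m" "b = g' t" using abc im' by auto
  have g'eq: "g' i = g' j \<longleftrightarrow> i = j" if "i < m" "j < m" for i j using inj' that by (auto simp: inj_on_def)
  show ?thesis
  proof (cases "m = 4")
    case True
    define \<sigma> where "\<sigma> i = (if i = 0 then t else if i = t then 0 else i)" for i :: nat
    have sb: "bij_betw \<sigma> {0..<m} {0..<m}"
      by (rule bij_betw_byWitness[where f'=\<sigma>]) (use t in \<open>auto simp: \<sigma>_def\<close>)
    have sinj: "\<sigma> i = \<sigma> j \<longleftrightarrow> i = j" for i j unfolding \<sigma>_def by auto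
    have slt: "\<sigma> i < m" if "i < m" for i using that t unfolding \<sigma>_def by auto
    have bij2: "bij_betw (g' \<circ> \<sigma>) {0..<m} V'" using bij_betw_trans[OF sb bij] .
    have iso2: "{(g' \<circ> \<sigma>) i, (g' \<circ> \<sigma>) j} \<in> E' \<longleftrightarrow> {i,j} \<in> wheel_edges m" if "i < m" "j < m" for i j
      using iso[OF slt[OF that(1)] slt[OF that(2)]] W4[of "\<sigma> i" "\<sigma> j"] W4[of i j] slt that True sinj
      by simp
    have h0: "(g' \<circ> \<sigma>) 0 = b" using t unfolding \<sigma>_def by simp
    show ?thesis
      by (rule hub_case[OF m4 bij2 iso2 sub v abc(1) abc(3)]) (use abc E h0 in auto)
  next
    case False
    then have m5: "m \<ge> 5" using m4 by simp
    have pq: "{p,q} \<in> wheel_edges m" using iso[OF p(1) q(1)] p q abc by simp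
    have pt: "{p,t} \<in> wheel_edges m" using iso[OF p(1) t(1)] p t abc by simp
    have qt: "{q,t} \<in> wheel_edges m" using iso[OF q(1) t(1)] q t abc by (simp add: insert_commute)
    have ne: "p \<noteq> q" "p \<noteq> t" "q \<noteq> t" using p q t abc by auto
    show ?thesis
    proof (cases "p = 0")
      case True
      have "E = (E' - {{g' 0, g' q}}) \<union> {{v, g' 0}, {v, g' t}, {v, g' q}}" using E p q t True by simp
      from spoke_contra[OF m5 bij iso sub v _ q(1) t(1) _ qt this tr] ne True show ?thesis by simp
    next
      case pF: False
      show ?thesis
      proof (cases "q = 0")
        case True
        have pt': "{p,t} \<in> wheel_edges m" by (rule pt)
        have "E = (E' - {{g' 0, g' p}}) \<union> {{v, g' 0}, {v, g' t}, {v, g' p}}"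
          using E p q t True by (auto simp: insert_commute)
        from spoke_contra[OF m5 bij iso sub v _ p(1) t(1) _ pt' this tr] ne True pF show ?thesis by simp
      next
        case qF: False
        have "t = 0"
        proof (rule ccontr)
          assume "t \<noteq> 0"
          then show False using W_tri[OF m5 pq qt pt] pF qF by simp
        qed
        then show ?thesis
          by (intro hub_case[OF m4 bij iso sub v abc(1) abc(3)]) (use abc E t in auto)
      qed
    qed
  qed
qed


lemma pick3:
  assumes N: "nbr E v = {a0,b0,c0}" and d: "a0 \<noteq> b0" "a0 \<noteq> c0" "b0 \<noteq> c0"
    and ha: "{a0,b0} \<in> E \<or> {a0,c0} \<in> E" and hb: "{a0,b0} \<in> E \<or> {b0,c0} \<in> E"
    and hc: "{a0,c0} \<in> E \<or> {b0,c0} \<in> E"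
  shows "\<exists>a b c. nbr E v = {a,b,c} \<and> a \<noteq> b \<and> a \<noteq> c \<and> b \<noteq> c \<and> {a,b} \<in> E \<and> {b,c} \<in> E"
proof -
  consider "{a0,b0} \<in> E" "{b0,c0} \<in> E" | "{a0,b0} \<in> E" "{a0,c0} \<in> E" | "{a0,c0} \<in> E" "{b0,c0} \<in> E"
    using ha hb hc by blast
  then show ?thesis
  proof cases
    case 1 then show ?thesis using N d by blast
  next
    case 2
    have "nbr E v = {b0,a0,c0}" using N by (simp add: insert_commute)
    moreover have "{b0,a0} \<in> E" using 2 by (simp add: insert_commute)
    ultimately show ?thesis using 2 d by blast
  next
    case 3
    have "nbr E v = {a0,c0,b0}" using N by (simp add: insert_commute)
    moreover have "{c0,b0} \<in> E" using 3 by (simp add: insert_commute)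
    ultimately show ?thesis using 3 d by blast
  qed
qed

lemma edges_at:
  assumes s: "simple_graph V E" and Nv: "nbr E v = {a,b,c}"
  shows "{e\<in>E. v \<in> e} = {{v,a},{v,b},{v,c}}"
proof
  have nbE: "x \<in> {a,b,c}" if "{v,x} \<in> E" for x using that Nv unfolding nbr_def by blast
  show "{e\<in>E. v \<in> e} \<subseteq> {{v,a},{v,b},{v,c}}"
  proof
    fix e assume e: "e \<in> {e\<in>E. v \<in> e}"
    then obtain x y where xy: "e = {x,y}" using sg_edge_ex[OF s] by blast
    show "e \<in> {{v,a},{v,b},{v,c}}"
    proof (cases "x = v")
      case True then have "y \<in> {a,b,c}" using nbE e xy by auto
      then show ?thesis using xy True by auto
    next
      case False then have "y = v" using e xy by auto
      then have "x \<in> {a,b,c}" using nbE e xy by (auto simp: insert_commute)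
      then show ?thesis using xy \<open>y = v\<close> by (auto simp: insert_commute)
    qed
  qed
  have "a \<in> nbr E v" "b \<in> nbr E v" "c \<in> nbr E v" using Nv by auto
  then show "{{v,a},{v,b},{v,c}} \<subseteq> {e\<in>E. v \<in> e}" unfolding nbr_def by auto
qed

lemma main:
  assumes "simple_graph V E" "k_connected 3 V E" "tri E" "card V = n"
  shows "2*n - 2 \<le> card E \<and> (card E = 2*n - 2 \<longrightarrow> wiso V E n)"
  using assms
proof (induction n arbitrary: V E rule: less_induct)
  case (less n V E)
  have s: "simple_graph V E" and k: "k_connected 3 V E" and t: "tri E" and cV: "card V = n"
    using less.prems by auto
  have n4: "n \<ge> 4" using k cV unfolding k_connected_def by simp
  have fV: "finite V" using s unfolding simple_graph_def by blast
  have deg: "\<forall>x\<in>V. 3 \<le> card (nbr E x)" using deg3[OF s k] by blast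
  have hs: "(\<Sum>x\<in>V. card (nbr E x)) = 2 * card E" by (rule handshake[OF s])
  show ?case
  proof (cases "\<exists>v\<in>V. card (nbr E v) = 3")
    case False
    then have "\<forall>x\<in>V. 4 \<le> card (nbr E x)" using deg by force
    then have "(\<Sum>x\<in>V. (4::nat)) \<le> (\<Sum>x\<in>V. card (nbr E x))" by (intro sum_mono) auto
    then have "4 * n \<le> 2 * card E" using hs cV by simp
    then have "card E \<noteq> 2*n - 2" "2*n - 2 \<le> card E" using n4 by arith+
    then show ?thesis by simp
  next
    case True
    then obtain v where v: "v \<in> V" "card (nbr E v) = 3" by blast
    then obtain a0 b0 c0 where N0: "nbr E v = {a0,b0,c0}" "a0 \<noteq> b0" "b0 \<noteq> c0" "a0 \<noteq> c0"
      unfolding card_3_iff by blast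
    have tri_at: "\<exists>z\<in>{a0,b0,c0}. z \<noteq> x \<and> {x,z} \<in> E" if "x \<in> {a0,b0,c0}" for x
    proof -
      have "{v,x} \<in> E" using that N0 unfolding nbr_def by blast
      then obtain z where z: "{v,z} \<in> E" "{x,z} \<in> E" using t unfolding tri_def by blast
      have "z \<in> {a0,b0,c0}" using z(1) N0 unfolding nbr_def by blast
      moreover have "z \<noteq> x" using sg_edge[OF s z(2)] by blast
      ultimately show ?thesis using z by blast
    qed
    have ha: "{a0,b0} \<in> E \<or> {a0,c0} \<in> E" using tri_at[of a0] by auto
    have hb: "{a0,b0} \<in> E \<or> {b0,c0} \<in> E" using tri_at[of b0] by (auto simp: insert_commute)
    have hc: "{a0,c0} \<in> E \<or> {b0,c0} \<in> E" using tri_at[of c0] by (auto simp: insert_commute)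
    obtain a b c where abc: "nbr E v = {a,b,c}" "a \<noteq> b" "a \<noteq> c" "b \<noteq> c" "{a,b} \<in> E" "{b,c} \<in> E"
      using pick3[OF N0(1) N0(2) N0(4) N0(3) ha hb hc] by blast
    show ?thesis
    proof (cases "n = 4")
      case True
      have w: "wiso V E 4" using base4[OF s k] cV True by simp
      have "card E = card (wheel_edges 4)" by (rule iso_card[OF s wiso_graph_iso[OF w]]) simp
      then have "card E = 6" using card_W[of 4] by simp
      then show ?thesis using True w by simp
    next
      case False
      then have n5: "card V \<ge> 5" using n4 cV by simp
      define E' where "E' = {e\<in>E. v \<notin> e} \<union> {{a,c}}"
      have R: "simple_graph (V - {v}) E'" "k_connected 3 (V - {v}) E'" "tri E'"
        "card E = card E' + (if {a,c} \<in> E then 3 else 2)"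
        using reduce[OF s k t v(1) abc n5] unfolding E'_def by auto
      have cV': "card (V - {v}) = n - 1" using cV v fV by simp
      have IH: "2*(n-1) - 2 \<le> card E' \<and> (card E' = 2*(n-1) - 2 \<longrightarrow> wiso (V - {v}) E' (n-1))"
        using less.IH[of "n-1" "V - {v}" E'] R cV' n4 by simp
      have ineq: "2*n - 2 \<le> card E" using IH R(4) n4 by (auto split: if_splits)
      have eq: "wiso V E n" if ce: "card E = 2*n - 2"
      proof -
        have acE: "{a,c} \<notin> E"
        proof
          assume "{a,c} \<in> E"
          then have "card E = card E' + 3" using R(4) by simp
          moreover have "2*(n-1) - 2 \<le> card E'" using IH by blast
          ultimately show False using ce n4 by linarith
        qed
        then have "card E' = 2*(n-1) - 2" using R(4) ce n4 by simp
        then have "wiso (V - {v}) E' (n-1)" using IH by blast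
        then obtain g' where bij: "bij_betw g' {0..<n-1} (V - {v})"
          and iso: "\<forall>i<n-1. \<forall>j<n-1. {g' i, g' j} \<in> E' \<longleftrightarrow> {i,j} \<in> wheel_edges (n-1)"
          unfolding wiso_def by blast
        have sub: "e \<subseteq> V - {v}" if "e \<in> E'" for e using sg_edge_ex[OF R(1) that] by blast
        have inN: "a \<in> nbr E v" "b \<in> nbr E v" "c \<in> nbr E v" using abc by auto
        then have va: "{v,a} \<in> E" "{v,b} \<in> E" "{v,c} \<in> E" unfolding nbr_def by auto
        have aV: "a \<in> V - {v}" "b \<in> V - {v}" "c \<in> V - {v}"
          using sg_edge[OF s va(1)] sg_edge[OF s va(2)] sg_edge[OF s va(3)] by auto
        have acE': "{a,c} \<in> E'" "{a,b} \<in> E'" "{b,c} \<in> E'" using abc aV unfolding E'_def by auto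
        have Eeq: "E = (E' - {{a,c}}) \<union> {{v,a},{v,b},{v,c}}"
        proof -
          have "E' - {{a,c}} = {e\<in>E. v \<notin> e}" unfolding E'_def using acE by auto
          moreover have "E = {e\<in>E. v \<notin> e} \<union> {e\<in>E. v \<in> e}" by blast
          ultimately show ?thesis using edges_at[OF s abc(1)] by simp
        qed
        have fin: "wiso (insert v (V - {v})) E (n - 1 + 1)"
          by (rule finish[OF _ bij _ sub _ aV abc(2-4) acE' Eeq t]) (use n5 cV iso in auto)
        moreover have "insert v (V - {v}) = V" using v by blast
        moreover have "n - 1 + 1 = n" using n4 by simp
        ultimately show ?thesis by simp
      qed
      show ?thesis using ineq eq by blast
    qed
  qed
qed

lemma pan_tri:
  assumes s: "simple_graph V E" and p: "edge_pancyclic V E" and c: "card V \<ge> 3"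
  shows "tri E"
  unfolding tri_def
proof (intro allI impI)
  fix x y assume xy: "{x,y} \<in> E"
  obtain cs where cs: "is_cycle E cs" "length cs = 3" "{x,y} \<in> cycle_edges cs"
    using p xy c unfolding edge_pancyclic_def by blast
  obtain c0 c1 c2 where cl: "cs = [c0,c1,c2]"
    using cs(2) by (cases cs; cases "tl cs"; cases "tl (tl cs)") auto
  have ed: "\<forall>i<3. {cs ! i, cs ! ((i + 1) mod 3)} \<in> E" using cs unfolding is_cycle_def by simp
  have e01: "{c0,c1} \<in> E" using ed[rule_format, of 0] cl by simp
  have e12: "{c1,c2} \<in> E" using ed[rule_format, of 1] cl by simp
  have e20: "{c2,c0} \<in> E" using ed[rule_format, of 2] cl by simp
  have e10: "{c1,c0} \<in> E" and e21: "{c2,c1} \<in> E" and e02: "{c0,c2} \<in> E"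
    using e01 e12 e20 by (simp_all add: insert_commute)
  have dist: "c0 \<noteq> c1" "c1 \<noteq> c2" "c0 \<noteq> c2" using cs(1) cl unfolding is_cycle_def by auto
  obtain i where i: "i < 3" "{x,y} = {cs ! i, cs ! ((i + 1) mod 3)}" using cs(2,3) unfolding cycle_edges_def by auto
  have "i = 0 \<or> i = 1 \<or> i = 2" using i by linarith
  then have "{x,y} = {c0,c1} \<or> {x,y} = {c1,c2} \<or> {x,y} = {c2,c0}" using i(2) cl by (elim disjE) simp_all
  then show "\<exists>z. {x,z} \<in> E \<and> {y,z} \<in> E"
  proof (elim disjE)
    assume "{x,y} = {c0,c1}"
    then have "x = c0 \<and> y = c1 \<or> x = c1 \<and> y = c0" by (auto simp: doubleton_eq_iff)
    then show ?thesis using e01 e12 e20 e10 e21 e02 by (elim disjE conjE) (rule exI[of _ c2]; simp)+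
  next
    assume "{x,y} = {c1,c2}"
    then have "x = c1 \<and> y = c2 \<or> x = c2 \<and> y = c1" by (auto simp: doubleton_eq_iff)
    then show ?thesis using e01 e12 e20 e10 e21 e02 by (elim disjE conjE) (rule exI[of _ c0]; simp)+
  next
    assume "{x,y} = {c2,c0}"
    then have "x = c2 \<and> y = c0 \<or> x = c0 \<and> y = c2" by (auto simp: doubleton_eq_iff)
    then show ?thesis using e01 e12 e20 e10 e21 e02 by (elim disjE conjE) (rule exI[of _ c1]; simp)+
  qed
qed

theorem theorem3:
  fixes V :: "'a set" and E :: "'a set set" and n :: nat
  assumes "simple_graph V E"
    and "k_connected 3 V E"
    and "edge_pancyclic V E"
    and "card V = n"
  shows "card E \<ge> 2 * n - 2 \<and>
         (card E = 2 * n - 2 \<longleftrightarrow> graph_iso V E {0..<n} (wheel_edges n))"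
proof -
  have n4: "n \<ge> 4" using assms(2,4) unfolding k_connected_def by simp
  have t: "tri E" using pan_tri[OF assms(1,3)] assms(4) n4 by simp
  have m: "2*n - 2 \<le> card E \<and> (card E = 2*n - 2 \<longrightarrow> wiso V E n)" by (rule main[OF assms(1,2) t assms(4)])
  have "graph_iso V E {0..<n} (wheel_edges n) \<Longrightarrow> card E = 2*n - 2"
    using iso_card[OF assms(1) _ n4] card_W[OF n4] by simp
  then show ?thesis using m wiso_graph_iso by blast
qed


end
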